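(* Every unary FA-presentable tournament $(X,\rightarrow)$ decomposes as a finite disjoint union of trivial tournaments, countably infinite complete ascending tournaments, countably infinite complete descending tournaments, countably infinite near-complete ascending tournaments, and countably infinite near-complete descending tournaments; that is, $X$ can be partitioned into finitely many subsets each of which, with the induced relation, is a one-element tournament or a countably infinite tournament of one of these four kinds.
   Context: A tournament is $(X,\rightarrow)$ with $x\not\rightarrow x$ for all $x$ and, for distinct $x,y$, exactly one of $x\rightarrow y$, $y\rightarrow x$. A countably infinite tournament on $X=\{x_i:i\in\mathbb{N}\}$ is complete ascending if $x_i\rightarrow x_j$ for all $i<j$; complete descending if $x_j\rightarrow x_i$ for all $i<j$; near-complete ascending if $x_{i+1}\rightarrow x_i$ for all $i$ and $x_i\rightarrow x_j$ for all $i<j-1$; near-complete descending if $x_i\rightarrow x_{i+1}$ for all $i$ and $x_j\rightarrow x_i$ for all $i<j-1$. A structure is unary FA-presentable if there exist a regular language $L\subseteq a^*$ and a surjection $\phi:L\to X$ such that $\{(u,v)\in L^2:u\phi=v\phi\}$ and $\{(u,v)\in L^2:u\phi\rightarrow v\phi\}$ are regular relations (the sets of words $\mathrm{conv}(u,v)$ over $\{a,\$\}^2$, reading $u,v$ in parallel and padding the shorter with $\$$, are regular languages). *)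

theory Defs
  imports Main
begin

definition regular_lang :: "'s list set \<Rightarrow> bool" where
  "regular_lang L \<longleftrightarrow>
     (\<exists>(N::nat) (\<delta>::nat \<Rightarrow> 's \<Rightarrow> nat) (q0::nat) (F::nat set).
        q0 < N \<and> (\<forall>q<N. \<forall>s. \<delta> q s < N) \<and>
        L = {w. foldl \<delta> q0 w \<in> F})"

text \<open>Convolution of two words: read in parallel, padding the shorter with None (the symbol \$).\<close>
definition conv :: "'a list \<Rightarrow> 'b list \<Rightarrow> ('a option \<times> 'b option) list" where
  "conv u v = map (\<lambda>i. (if i < length u then Some (u ! i) else None,
                         if i < length v then Some (v ! i) else None))
                  [0..<max (length u) (length v)]"

definition regular_rel :: "('a list \<times> 'b list) set \<Rightarrow> bool" where
  "regular_rel R \<longleftrightarrow> regular_lang {conv u v | u v. (u, v) \<in> R}"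

definition tournament :: "'x set \<Rightarrow> ('x \<Rightarrow> 'x \<Rightarrow> bool) \<Rightarrow> bool" where
  "tournament X r \<longleftrightarrow> (\<forall>x\<in>X. \<not> r x x) \<and>
     (\<forall>x\<in>X. \<forall>y\<in>X. x \<noteq> y \<longrightarrow> (r x y \<longleftrightarrow> \<not> r y x))"

text \<open>Unary alphabet {a}: the type unit; the word a^n is replicate n ().\<close>
definition unary_FA_presentable :: "'x set \<Rightarrow> ('x \<Rightarrow> 'x \<Rightarrow> bool) \<Rightarrow> bool" where
  "unary_FA_presentable X r \<longleftrightarrow>
     (\<exists>(L::unit list set) (\<phi>::unit list \<Rightarrow> 'x).
        regular_lang L \<and> \<phi> ` L = X \<and>
        regular_rel {(u, v). u \<in> L \<and> v \<in> L \<and> \<phi> u = \<phi> v} \<and>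
        regular_rel {(u, v). u \<in> L \<and> v \<in> L \<and> r (\<phi> u) (\<phi> v)})"

definition complete_ascending :: "'x set \<Rightarrow> ('x \<Rightarrow> 'x \<Rightarrow> bool) \<Rightarrow> bool" where
  "complete_ascending Y r \<longleftrightarrow> (\<exists>f::nat \<Rightarrow> 'x. bij_betw f UNIV Y \<and>
      (\<forall>i j. i < j \<longrightarrow> r (f i) (f j)))"

definition complete_descending :: "'x set \<Rightarrow> ('x \<Rightarrow> 'x \<Rightarrow> bool) \<Rightarrow> bool" where
  "complete_descending Y r \<longleftrightarrow> (\<exists>f::nat \<Rightarrow> 'x. bij_betw f UNIV Y \<and>
      (\<forall>i j. i < j \<longrightarrow> r (f j) (f i)))"

definition near_complete_ascending :: "'x set \<Rightarrow> ('x \<Rightarrow> 'x \<Rightarrow> bool) \<Rightarrow> bool" where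
  "near_complete_ascending Y r \<longleftrightarrow> (\<exists>f::nat \<Rightarrow> 'x. bij_betw f UNIV Y \<and>
      (\<forall>i. r (f (Suc i)) (f i)) \<and> (\<forall>i j. i + 1 < j \<longrightarrow> r (f i) (f j)))"

definition near_complete_descending :: "'x set \<Rightarrow> ('x \<Rightarrow> 'x \<Rightarrow> bool) \<Rightarrow> bool" where
  "near_complete_descending Y r \<longleftrightarrow> (\<exists>f::nat \<Rightarrow> 'x. bij_betw f UNIV Y \<and>
      (\<forall>i. r (f i) (f (Suc i))) \<and> (\<forall>i j. i + 1 < j \<longrightarrow> r (f j) (f i)))"

end

theory Submission imports Defs "HOL-Library.Infinite_Set" begin

lemma foldl_replicate_funpow:
  "foldl \<delta> q (replicate k s) = ((\<lambda>q. \<delta> q s)^^k) q"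
  by (induction k arbitrary: q) (simp_all add: funpow_Suc_right del: funpow.simps)

lemma conv_unary:
  assumes "m \<le> n"
  shows "conv (replicate m ()) (replicate n ()) =
    replicate m (Some (), Some ()) @ replicate (n - m) (None, Some ())"
  using assms by (intro nth_equalityI) (auto simp: conv_def nth_append max_def)

lemma conv_length: "length (conv u v) = max (length u) (length v)"
  by (simp add: conv_def)

lemma conv_fst: "i < length (conv u v) \<Longrightarrow> fst (conv u v ! i) = (if i < length u then Some (u ! i) else None)"
  by (simp add: conv_def)

lemma conv_snd: "i < length (conv u v) \<Longrightarrow> snd (conv u v ! i) = (if i < length v then Some (v ! i) else None)"
  by (simp add: conv_def)

lemma unit_list_eq: "length (u::unit list) = length v \<Longrightarrow> u = v"
  by (simp add: list_eq_iff_nth_eq)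

lemma conv_inj:
  fixes u v u' v' :: "unit list"
  assumes "conv u v = conv u' v'"
  shows "u = u' \<and> v = v'"
proof -
  have L: "max (length u) (length v) = max (length u') (length v')"
    using arg_cong[OF assms, of length] by (simp add: conv_length)
  have "length u = length u'"
  proof (rule ccontr)
    assume ne: "length u \<noteq> length u'"
    show False
    proof (cases "length u < length u'")
      case True
      let ?i = "length u"
      have "?i < length (conv u' v')" using True by (simp add: conv_length max_def)
      then have a: "fst (conv u' v' ! ?i) \<noteq> None" using True by (simp add: conv_fst)
      have "?i < length (conv u v)" using \<open>?i < length (conv u' v')\<close> assms by simp
      then have "fst (conv u v ! ?i) = None" by (simp add: conv_fst)
      then show False using a assms by simp
    next
      case False
      then have True': "length u' < length u" using ne by simp
      let ?i = "length u'"
      have "?i < length (conv u v)" using True' by (simp add: conv_length max_def)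
      then have a: "fst (conv u v ! ?i) \<noteq> None" using True' by (simp add: conv_fst)
      have "?i < length (conv u' v')" using \<open>?i < length (conv u v)\<close> assms by simp
      then have "fst (conv u' v' ! ?i) = None" by (simp add: conv_fst)
      then show False using a assms by simp
    qed
  qed
  moreover have "length v = length v'"
  proof (rule ccontr)
    assume ne: "length v \<noteq> length v'"
    show False
    proof (cases "length v < length v'")
      case True
      let ?i = "length v"
      have "?i < length (conv u' v')" using True by (simp add: conv_length max_def)
      then have a: "snd (conv u' v' ! ?i) \<noteq> None" using True by (simp add: conv_snd)
      have "?i < length (conv u v)" using \<open>?i < length (conv u' v')\<close> assms by simp
      then have "snd (conv u v ! ?i) = None" by (simp add: conv_snd)
      then show False using a assms by simp
    next
      case False
      then have True': "length v' < length v" using ne by simp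
      let ?i = "length v'"
      have "?i < length (conv u v)" using True' by (simp add: conv_length max_def)
      then have a: "snd (conv u v ! ?i) \<noteq> None" using True' by (simp add: conv_snd)
      have "?i < length (conv u' v')" using \<open>?i < length (conv u v)\<close> assms by simp
      then have "snd (conv u' v' ! ?i) = None" by (simp add: conv_snd)
      then show False using a assms by simp
    qed
  qed
  ultimately show ?thesis using unit_list_eq by blast
qed

lemma reg_rel_unary:
  assumes "regular_rel (R :: (unit list \<times> unit list) set)"
  obtains N and \<delta> :: "nat \<Rightarrow> unit option \<times> unit option \<Rightarrow> nat" and q0 and F :: "nat set" where "q0 < N" "\<forall>q<N. \<forall>s. \<delta> q s < N"
    "\<forall>m n. m \<le> n \<longrightarrow> ((replicate m (), replicate n ()) \<in> R \<longleftrightarrow>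
       ((\<lambda>q. \<delta> q (None, Some ()))^^(n-m)) (((\<lambda>q. \<delta> q (Some (), Some ()))^^m) q0) \<in> F)"
proof -
  have mem: "(u, v) \<in> R \<longleftrightarrow> conv u v \<in> {conv u v | u v. (u, v) \<in> R}" for u v
  proof
    assume "(u, v) \<in> R" then show "conv u v \<in> {conv u v | u v. (u, v) \<in> R}" by blast
  next
    assume "conv u v \<in> {conv u v | u v. (u, v) \<in> R}"
    then obtain u' v' where e: "conv u v = conv u' v'" "(u', v') \<in> R" by blast
    then show "(u, v) \<in> R" using conv_inj[OF e(1)] by simp
  qed
  have "\<exists>(N::nat) (\<delta>::nat \<Rightarrow> unit option \<times> unit option \<Rightarrow> nat) (q0::nat) (F::nat set).
        q0 < N \<and> (\<forall>q<N. \<forall>s. \<delta> q s < N) \<and>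
        {conv u v | u v. (u, v) \<in> R} = {w. foldl \<delta> q0 w \<in> F}"
    using assms unfolding regular_rel_def regular_lang_def .
  then show ?thesis
  proof (elim exE conjE)
    fix N q0 and \<delta> :: "nat \<Rightarrow> unit option \<times> unit option \<Rightarrow> nat" and F :: "nat set"
    assume h: "q0 < N" "\<forall>q<N. \<forall>s. \<delta> q s < N"
        "{conv u v | u v. (u, v) \<in> R} = {w. foldl \<delta> q0 w \<in> F}"
    have "\<forall>m n. m \<le> n \<longrightarrow> ((replicate m (), replicate n ()) \<in> R \<longleftrightarrow>
         ((\<lambda>q. \<delta> q (None, Some ()))^^(n-m)) (((\<lambda>q. \<delta> q (Some (), Some ()))^^m) q0) \<in> F)"
    proof (intro allI impI)
      fix m n :: nat assume "m \<le> n"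
      show "((replicate m (), replicate n ()) \<in> R \<longleftrightarrow>
         ((\<lambda>q. \<delta> q (None, Some ()))^^(n-m)) (((\<lambda>q. \<delta> q (Some (), Some ()))^^m) q0) \<in> F)"
      proof -
        have "(replicate m (), replicate n ()) \<in> R \<longleftrightarrow>
          conv (replicate m ()) (replicate n ()) \<in> {w. foldl \<delta> q0 w \<in> F}"
          by (simp only: mem[of "replicate m ()" "replicate n ()"] h(3))
        then show ?thesis using \<open>m \<le> n\<close> by (simp add: conv_unary foldl_replicate_funpow)
      qed
    qed
    then show ?thesis by (rule that[OF h(1) h(2)])
  qed
qed

definition per :: "(nat \<Rightarrow> nat) \<Rightarrow> nat \<Rightarrow> nat \<Rightarrow> nat \<Rightarrow> bool" where
  "per f N T p \<longleftrightarrow> (\<forall>i\<ge>T. \<forall>q<N. (f^^(i+p)) q = (f^^i) q)"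

lemma funpow_bound: "\<forall>q<N. f q < N \<Longrightarrow> q < N \<Longrightarrow> (f^^i) q < N"
  by (induction i) auto

lemma per_exists:
  assumes "\<forall>q<N. f q < N"
  shows "\<exists>T p. p > 0 \<and> per f N T p"
proof -
  define h where "h i = map (\<lambda>q. (f^^i) q) [0..<N]" for i
  have "range h \<subseteq> {xs. set xs \<subseteq> {..<N} \<and> length xs = N}"
    using funpow_bound[OF assms] by (auto simp: h_def)
  then have "finite (range h)" using finite_lists_length_eq[of "{..<N}" N] finite_subset by blast
  then have "\<not> inj h" using finite_imageD[of h UNIV] by auto
  then obtain i j where ij: "i \<noteq> j" "h i = h j" unfolding inj_def by blast
  then obtain i j where ij: "i < j" "h i = h j"
    by (metis linorder_neqE_nat)
  have eq: "(f^^i) q = (f^^j) q" if "q < N" for q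
  proof -
    have "\<forall>x\<in>{0..<N}. (f^^i) x = (f^^j) x"
      using ij(2) by (simp add: h_def)
    then show ?thesis using that by simp
  qed
  have "per f N i (j - i)"
    unfolding per_def
  proof (intro allI impI)
    fix k q assume "i \<le> k" "q < N"
    have "k + (j-i) = (k-i) + j" using \<open>i \<le> k\<close> ij(1) by arith
    then have "(f^^(k + (j-i))) q = (f^^((k-i) + j)) q" by simp
    also have "\<dots> = (f^^(k-i)) ((f^^j) q)" by (simp add: funpow_add)
    also have "\<dots> = (f^^(k-i)) ((f^^i) q)" using eq \<open>q<N\<close> by simp
    also have "\<dots> = (f^^((k-i)+i)) q" by (simp add: funpow_add)
    also have "\<dots> = (f^^k) q" using \<open>i \<le> k\<close> by simp
    finally show "(f^^(k + (j-i))) q = (f^^k) q" .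
  qed
  then show ?thesis using ij(1) by (intro exI[of _ i] exI[of _ "j-i"]) auto
qed

lemma per_mult:
  assumes "per f N T p" "T \<le> i" "q < N"
  shows "(f^^(i + k*p)) q = (f^^i) q"
proof (induction k)
  case (Suc k)
  have "(f^^(i + Suc k * p)) q = (f^^((i + k*p) + p)) q" by (simp add: algebra_simps)
  also have "\<dots> = (f^^(i + k*p)) q" using assms unfolding per_def by simp
  finally show ?case using Suc by simp
qed simp

lemma per_mono:
  assumes "per f N T p" "T \<le> T'" "p dvd p'"
  shows "per f N T' p'"
proof -
  obtain k where "p' = k * p" using assms(3) by (auto simp: dvd_def mult.commute)
  then show ?thesis using per_mult[OF assms(1)] assms(2) unfolding per_def by auto
qed

lemma st_periodic:
  assumes "per A N T p" "per B N T p" "q0 < N" "\<forall>q<N. A q < N" "T \<le> p" "T \<le> m" "1 \<le> j"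
  shows "(B^^(j*p)) ((A^^(m+k*p)) q0) = (B^^p) ((A^^m) q0)"
    and "(A^^(m+k*p)) q0 = (A^^m) q0"
proof -
  show a: "(A^^(m+k*p)) q0 = (A^^m) q0" using per_mult[OF assms(1) assms(6) assms(3)] .
  have "(A^^m) q0 < N" using funpow_bound assms by blast
  moreover have "j * p = p + (j - 1) * p" using assms(7)
    by (cases j) auto
  ultimately have "(B^^(j*p)) ((A^^m) q0) = (B^^p) ((A^^m) q0)"
    using per_mult[OF assms(2) assms(5)] by metis
  then show "(B^^(j*p)) ((A^^(m+k*p)) q0) = (B^^p) ((A^^m) q0)" using a by simp
qed


definition good :: "('x \<Rightarrow> 'x \<Rightarrow> bool) \<Rightarrow> 'x set \<Rightarrow> bool" where
  "good r S \<longleftrightarrow> (\<forall>Y\<subseteq>S. infinite Y \<longrightarrow> complete_ascending Y r \<or> complete_descending Y r)"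

lemma good_finite: "finite S \<Longrightarrow> good r S"
  unfolding good_def using finite_subset by blast

lemma good_seq:
  fixes x :: "nat \<Rightarrow> 'x"
  assumes "inj x" "\<forall>i j. i < j \<longrightarrow> R (x i) (x j)"
    and "R = r \<or> R = (\<lambda>a b. r b a)"
  shows "good r (range x)"
  unfolding good_def
proof (intro allI impI)
  fix Y assume Y: "Y \<subseteq> range x" "infinite Y"
  define I where "I = x -` Y"
  have YI: "Y = x ` I" using Y(1) by (auto simp: I_def)
  have inf: "infinite I" using Y(2) YI by auto
  define g where "g = x \<circ> enumerate I"
  have b1: "bij_betw (enumerate I) UNIV I" using bij_enumerate[OF inf] .
  have b2: "bij_betw x I Y" unfolding bij_betw_def using YI assms(1) inj_on_subset[of x UNIV I] by blast
  have bij: "bij_betw g UNIV Y" unfolding g_def using bij_betw_trans[OF b1 b2] .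
  have mono: "R (g i) (g j)" if "i < j" for i j
    using assms(2) enumerate_mono[OF that inf] by (simp add: g_def)
  show "complete_ascending Y r \<or> complete_descending Y r"
    using assms(3)
  proof
    assume "R = r" then show ?thesis using bij mono unfolding complete_ascending_def by blast
  next
    assume "R = (\<lambda>a b. r b a)" then show ?thesis using bij mono unfolding complete_descending_def by blast
  qed
qed

definition okpart :: "('x \<Rightarrow> 'x \<Rightarrow> bool) \<Rightarrow> 'x set \<Rightarrow> 'x set set \<Rightarrow> bool" where
  "okpart r U P \<longleftrightarrow> finite P \<and> \<Union>P = U \<and> (\<forall>Y\<in>P. Y \<noteq> {}) \<and>
           (\<forall>Y1\<in>P. \<forall>Y2\<in>P. Y1 \<noteq> Y2 \<longrightarrow> Y1 \<inter> Y2 = {}) \<and>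
           (\<forall>Y\<in>P. card Y = 1 \<or> complete_ascending Y r \<or> complete_descending Y r \<or>
                   near_complete_ascending Y r \<or> near_complete_descending Y r)"

lemma okpart_empty: "okpart r {} {}"
  by (simp add: okpart_def)

lemma okpart_add_block:
  assumes ok: "okpart r U P" and D: "D \<inter> U = {}" "D \<noteq> {}"
    and t: "card D = 1 \<or> complete_ascending D r \<or> complete_descending D r"
  shows "okpart r (U \<union> D) (insert D P)"
proof -
  note c = ok[unfolded okpart_def]
  note fP = conjunct1[OF c]
  note UP = conjunct1[OF conjunct2[OF c]]
  note ne = conjunct1[OF conjunct2[OF conjunct2[OF c]]]
  note dj = conjunct1[OF conjunct2[OF conjunct2[OF conjunct2[OF c]]]]
  note ty = conjunct2[OF conjunct2[OF conjunct2[OF conjunct2[OF c]]]]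
  have sub: "Y \<inter> D = {}" if "Y \<in> P" for Y
  proof -
    have "Y \<subseteq> U" using that UP by auto
    then show ?thesis using D(1) by auto
  qed
  show ?thesis
    unfolding okpart_def
  proof (intro conjI)
    show "finite (insert D P)" using fP by simp
    show "\<Union>(insert D P) = U \<union> D" using UP by auto
    show "\<forall>Y\<in>insert D P. Y \<noteq> {}" using ne D(2) by simp
    show "\<forall>Y1\<in>insert D P. \<forall>Y2\<in>insert D P. Y1 \<noteq> Y2 \<longrightarrow> Y1 \<inter> Y2 = {}"
    proof (intro ballI impI)
      fix Y1 Y2 assume Y: "Y1 \<in> insert D P" "Y2 \<in> insert D P" "Y1 \<noteq> Y2"
      show "Y1 \<inter> Y2 = {}"
      proof (cases "Y1 = D")
        case True
        then have "Y2 \<in> P" using Y by auto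
        then show ?thesis using sub[of Y2] True by (simp add: Int_commute)
      next
        case False
        then have Y1P: "Y1 \<in> P" using Y by auto
        show ?thesis
        proof (cases "Y2 = D")
          case True
          then show ?thesis using sub[OF Y1P] by simp
        next
          case False
          then have "Y2 \<in> P" using Y by auto
          then show ?thesis using dj[rule_format, OF Y1P _ Y(3)] by simp
        qed
      qed
    qed
    show "\<forall>Y\<in>insert D P. card Y = 1 \<or> complete_ascending Y r \<or> complete_descending Y r \<or>
                   near_complete_ascending Y r \<or> near_complete_descending Y r"
    proof
      fix Y assume "Y \<in> insert D P"
      then show "card Y = 1 \<or> complete_ascending Y r \<or> complete_descending Y r \<or>
                   near_complete_ascending Y r \<or> near_complete_descending Y r"
      proof
        assume "Y = D" then show ?thesis using t by auto
      next
        assume "Y \<in> P" then show ?thesis using ty by auto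
      qed
    qed
  qed
qed

lemma okpart_add_finite:
  assumes "finite D"
  shows "okpart r U P \<Longrightarrow> D \<inter> U = {} \<Longrightarrow> \<exists>P'. okpart r (U \<union> D) P'"
  using assms
proof (induction D arbitrary: U P rule: finite_induct)
  case empty
  then show ?case by auto
next
  case (insert x F)
  have d: "{x} \<inter> U = {}" "{x} \<noteq> {}" using insert.prems(2) by auto
  have a: "okpart r (U \<union> {x}) (insert {x} P)"
    by (rule okpart_add_block[OF insert.prems(1) d]) simp
  have b: "F \<inter> (U \<union> {x}) = {}" using insert.prems(2) insert.hyps(2) by auto
  have "\<exists>P'. okpart r (U \<union> {x} \<union> F) P'" by (rule insert.IH[OF a b])
  moreover have "U \<union> {x} \<union> F = U \<union> insert x F" by auto
  ultimately show ?case by simp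
qed

lemma partition_good:
  assumes "finite SS" "\<forall>S\<in>SS. good r S"
  shows "\<exists>P. okpart r (\<Union>SS) P"
  using assms
proof (induction rule: finite_induct)
  case empty
  have "okpart r (\<Union>{}) {}" using okpart_empty by simp
  then show ?case by (rule exI)
next
  case (insert S SS)
  have "\<forall>S\<in>SS. good r S" using insert.prems by simp
  then have "\<exists>P. okpart r (\<Union>SS) P" by (rule insert.IH)
  then obtain P where P: "okpart r (\<Union>SS) P" ..
  define D where "D = S - \<Union>SS"
  have gS: "good r S" using insert.prems by simp
  have DU: "D \<inter> \<Union>SS = {}" by (auto simp: D_def)
  have eq: "\<Union>SS \<union> D = \<Union>(insert S SS)" by (auto simp: D_def)
  show ?case
  proof (cases "finite D")
    case True
    show ?thesis using okpart_add_finite[OF True P DU] unfolding eq .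
  next
    case False
    have DS: "D \<subseteq> S" by (auto simp: D_def)
    have cD: "complete_ascending D r \<or> complete_descending D r"
      using gS[unfolded good_def, rule_format, OF DS False] .
    have t: "card D = 1 \<or> complete_ascending D r \<or> complete_descending D r"
      using cD by (rule disjI2)
    have "D \<noteq> {}" using False by auto
    then have "okpart r (\<Union>SS \<union> D) (insert D P)"
      using okpart_add_block[OF P DU _ t] by simp
    then show ?thesis unfolding eq by (rule exI)
  qed
qed


lemma unary_pres_elim:
  fixes X :: "'x set" and r :: "'x \<Rightarrow> 'x \<Rightarrow> bool"
  assumes "unary_FA_presentable X r"
  obtains L :: "unit list set" and \<phi> :: "unit list \<Rightarrow> 'x" where "\<phi> ` L = X"
    "regular_rel {(u, v). u \<in> L \<and> v \<in> L \<and> \<phi> u = \<phi> v}"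
    "regular_rel {(u, v). u \<in> L \<and> v \<in> L \<and> r (\<phi> u) (\<phi> v)}"
proof -
  have "\<exists>(L::unit list set) (\<phi>::unit list \<Rightarrow> 'x).
        regular_lang L \<and> \<phi> ` L = X \<and>
        regular_rel {(u, v). u \<in> L \<and> v \<in> L \<and> \<phi> u = \<phi> v} \<and>
        regular_rel {(u, v). u \<in> L \<and> v \<in> L \<and> r (\<phi> u) (\<phi> v)}"
    using assms unfolding unary_FA_presentable_def .
  then show ?thesis
  proof (elim exE conjE)
    fix L :: "unit list set" and \<phi> :: "unit list \<Rightarrow> 'x"
    assume h: "regular_lang L" "\<phi> ` L = X"
      "regular_rel {(u, v). u \<in> L \<and> v \<in> L \<and> \<phi> u = \<phi> v}"
      "regular_rel {(u, v). u \<in> L \<and> v \<in> L \<and> r (\<phi> u) (\<phi> v)}"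
    show ?thesis by (rule that[OF h(2) h(3) h(4)])
  qed
qed

theorem corollary5p14:
  fixes X :: "'x set" and r :: "'x \<Rightarrow> 'x \<Rightarrow> bool"
  assumes "tournament X r" and "unary_FA_presentable X r"
  shows "\<exists>P :: 'x set set. finite P \<and> \<Union>P = X \<and> (\<forall>Y\<in>P. Y \<noteq> {}) \<and>
           (\<forall>Y1\<in>P. \<forall>Y2\<in>P. Y1 \<noteq> Y2 \<longrightarrow> Y1 \<inter> Y2 = {}) \<and>
           (\<forall>Y\<in>P. card Y = 1 \<or> complete_ascending Y r \<or> complete_descending Y r \<or>
                   near_complete_ascending Y r \<or> near_complete_descending Y r)"
proof -
  obtain L :: "unit list set" and \<phi> :: "unit list \<Rightarrow> 'x" where L: "\<phi> ` L = X"
    and rE: "regular_rel {(u, v). u \<in> L \<and> v \<in> L \<and> \<phi> u = \<phi> v}"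
    and rR: "regular_rel {(u, v). u \<in> L \<and> v \<in> L \<and> r (\<phi> u) (\<phi> v)}"
    by (rule unary_pres_elim[OF assms(2)])
  define ER where "ER = {(u, v). u \<in> L \<and> v \<in> L \<and> \<phi> u = \<phi> v}"
  define RR where "RR = {(u, v). u \<in> L \<and> v \<in> L \<and> r (\<phi> u) (\<phi> v)}"
  define W where "W m = (replicate m () :: unit list)" for m
  obtain N1 and \<delta>1 :: "nat \<Rightarrow> unit option \<times> unit option \<Rightarrow> nat" and q1 and F1 :: "nat set" where a1: "q1 < N1" "\<forall>q<N1. \<forall>s. \<delta>1 q s < N1"
    and h1: "\<forall>m n. m \<le> n \<longrightarrow> ((replicate m (), replicate n ()) \<in> ER \<longleftrightarrow>
       ((\<lambda>q. \<delta>1 q (None, Some ()))^^(n-m)) (((\<lambda>q. \<delta>1 q (Some (), Some ()))^^m) q1) \<in> F1)"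
    by (rule reg_rel_unary[OF rE[folded ER_def]])
  obtain N2 and \<delta>2 :: "nat \<Rightarrow> unit option \<times> unit option \<Rightarrow> nat" and q2 and F2 :: "nat set" where a2: "q2 < N2" "\<forall>q<N2. \<forall>s. \<delta>2 q s < N2"
    and h2: "\<forall>m n. m \<le> n \<longrightarrow> ((replicate m (), replicate n ()) \<in> RR \<longleftrightarrow>
       ((\<lambda>q. \<delta>2 q (None, Some ()))^^(n-m)) (((\<lambda>q. \<delta>2 q (Some (), Some ()))^^m) q2) \<in> F2)"
    by (rule reg_rel_unary[OF rR[folded RR_def]])
  define A1 where "A1 = (\<lambda>q. \<delta>1 q (Some (), Some ()))"
  define B1 where "B1 = (\<lambda>q. \<delta>1 q (None, Some ()))"
  define A2 where "A2 = (\<lambda>q. \<delta>2 q (Some (), Some ()))"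
  define B2 where "B2 = (\<lambda>q. \<delta>2 q (None, Some ()))"
  have H1: "(W m, W n) \<in> ER \<longleftrightarrow> (B1^^(n-m)) ((A1^^m) q1) \<in> F1" if "m \<le> n" for m n
    using h1[rule_format, OF that] by (simp only: A1_def B1_def W_def)
  have H2: "(W m, W n) \<in> RR \<longleftrightarrow> (B2^^(n-m)) ((A2^^m) q2) \<in> F2" if "m \<le> n" for m n
    using h2[rule_format, OF that] by (simp only: A2_def B2_def W_def)
  have iA1: "\<forall>q<N1. A1 q < N1" and iB1: "\<forall>q<N1. B1 q < N1"
    using a1 by (auto simp: A1_def B1_def)
  have iA2: "\<forall>q<N2. A2 q < N2" and iB2: "\<forall>q<N2. B2 q < N2"
    using a2 by (auto simp: A2_def B2_def)
  obtain Ta1 pa1 where pa1: "pa1 > 0" "per A1 N1 Ta1 pa1" using per_exists[OF iA1] by blast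
  obtain Tb1 pb1 where pb1: "pb1 > 0" "per B1 N1 Tb1 pb1" using per_exists[OF iB1] by blast
  obtain Ta2 pa2 where pa2: "pa2 > 0" "per A2 N2 Ta2 pa2" using per_exists[OF iA2] by blast
  obtain Tb2 pb2 where pb2: "pb2 > 0" "per B2 N2 Tb2 pb2" using per_exists[OF iB2] by blast
  define T where "T = Ta1 + Tb1 + Ta2 + Tb2"
  define p where "p = pa1 * pb1 * pa2 * pb2 * (T + 1)"
  have ppos: "p > 0" using pa1 pb1 pa2 pb2 by (simp add: p_def)
  have Tp: "T \<le> p"
  proof -
    have "1 \<le> pa1 * pb1 * pa2 * pb2" using pa1 pb1 pa2 pb2 by (simp add: Suc_le_eq)
    then have "1 * (T + 1) \<le> pa1 * pb1 * pa2 * pb2 * (T + 1)" by (rule mult_right_mono) simp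
    then show ?thesis by (simp add: p_def)
  qed
  have PA1: "per A1 N1 T p" by (rule per_mono[OF pa1(2)]) (simp_all add: T_def p_def)
  have PB1: "per B1 N1 T p" by (rule per_mono[OF pb1(2)]) (simp_all add: T_def p_def)
  have PA2: "per A2 N2 T p" by (rule per_mono[OF pa2(2)]) (simp_all add: T_def p_def)
  have PB2: "per B2 N2 T p" by (rule per_mono[OF pb2(2)]) (simp_all add: T_def p_def)
  have inL: "W n \<in> L \<longleftrightarrow> (A1^^n) q1 \<in> F1" for n
  proof -
    have "W n \<in> L \<longleftrightarrow> (W n, W n) \<in> ER" by (simp add: ER_def)
    then show ?thesis using H1[of n n] by simp
  qed
  have LL: "W (T+c+k*p) \<in> L \<longleftrightarrow> W (T+c) \<in> L" for c k
    using inL st_periodic(2)[OF PA1 PB1 a1(1) iA1 Tp, of "T+c" 1 k] by simp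
  have diff: "T+c+k'*p - (T+c+k*p) = (k'-k)*p" for c k k' :: nat
    by (simp add: diff_mult_distrib)
  have EE: "(W (T+c+k*p), W (T+c+k'*p)) \<in> ER \<longleftrightarrow> (B1^^p) ((A1^^(T+c)) q1) \<in> F1"
    if "k < k'" for c k k'
  proof -
    have le: "T+c+k*p \<le> T+c+k'*p" using that by simp
    have "1 \<le> k' - k" using that by simp
    then show ?thesis
      using H1[OF le] diff st_periodic(1)[OF PA1 PB1 a1(1) iA1 Tp, of "T+c" "k'-k" k] by simp
  qed
  have RE: "(W (T+c+k*p), W (T+c+k'*p)) \<in> RR \<longleftrightarrow> (B2^^p) ((A2^^(T+c)) q2) \<in> F2"
    if "k < k'" for c k k'
  proof -
    have le: "T+c+k*p \<le> T+c+k'*p" using that by simp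
    have "1 \<le> k' - k" using that by simp
    then show ?thesis
      using H2[OF le] diff st_periodic(1)[OF PA2 PB2 a2(1) iA2 Tp, of "T+c" "k'-k" k] by simp
  qed
  define S where "S c = \<phi> ` {W (T+c+k*p) | k. W (T+c+k*p) \<in> L}" for c
  have tour: "\<And>x y. x \<in> X \<Longrightarrow> y \<in> X \<Longrightarrow> x \<noteq> y \<Longrightarrow> \<not> r x y \<Longrightarrow> r y x"
    using assms(1) unfolding tournament_def by blast
  have goodS: "good r (S c)" for c
  proof (cases "W (T+c) \<in> L")
    case False
    then have "S c = {}" using LL by (auto simp: S_def)
    then show ?thesis by (simp add: good_finite)
  next
    case True
    define x where "x k = \<phi> (W (T+c+k*p))" for k
    have allL: "W (T+c+k*p) \<in> L" for k using LL[of c k] True by simp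
    have Sx: "S c = range x" using allL by (auto simp: S_def x_def)
    have xX: "x k \<in> X" for k using allL L by (auto simp: x_def)
    show ?thesis
    proof (cases "(B1^^p) ((A1^^(T+c)) q1) \<in> F1")
      case True
      have "x k = x 0" for k
      proof (cases "k = 0")
        case False
        then have "(W (T+c+0*p), W (T+c+k*p)) \<in> ER" using EE[of 0 k c] True by simp
        then show ?thesis by (simp add: ER_def x_def)
      qed simp
      then have "S c = {x 0}" using Sx by auto
      then show ?thesis by (simp add: good_finite)
    next
      case nE: False
      have neq: "x k \<noteq> x k'" if "k < k'" for k k'
        using EE[OF that, of c] nE allL[of k] allL[of k'] by (simp add: ER_def x_def)
      have injx: "inj x"
      proof (rule injI)
        fix k k' assume "x k = x k'"
        then show "k = k'" using neq[of k k'] neq[of k' k] by (cases k k' rule: linorder_cases) auto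
      qed
      show ?thesis
      proof (cases "(B2^^p) ((A2^^(T+c)) q2) \<in> F2")
        case True
        have "\<forall>i j. i < j \<longrightarrow> r (x i) (x j)"
          using RE True allL by (auto simp: RR_def x_def)
        then show ?thesis using good_seq[OF injx, of r r] Sx by simp
      next
        case False
        have "\<forall>i j. i < j \<longrightarrow> (\<lambda>a b. r b a) (x i) (x j)"
        proof (intro allI impI)
          fix i j :: nat assume ij: "i < j"
          have "\<not> r (x i) (x j)" using RE[OF ij, of c] False allL by (simp add: RR_def x_def)
          then show "(\<lambda>a b. r b a) (x i) (x j)" using tour[OF xX xX neq[OF ij]] by simp
        qed
        then show ?thesis using good_seq[OF injx, of "\<lambda>a b. r b a" r] Sx by simp
      qed
    qed
  qed
  define F0 where "F0 = \<phi> ` (L \<inter> W ` {..<T})"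
  have fF0: "finite F0" by (simp add: F0_def)
  have Wlen: "u = W (length u)" for u :: "unit list" by (simp add: W_def unit_list_eq)
  have cover: "X = \<Union>(insert F0 (S ` {..<p}))"
  proof
    show "\<Union>(insert F0 (S ` {..<p})) \<subseteq> X"
      using L by (auto simp: F0_def S_def)
  next
    show "X \<subseteq> \<Union>(insert F0 (S ` {..<p}))"
    proof
      fix y assume "y \<in> X"
      then obtain u where u: "u \<in> L" "y = \<phi> u" using L by blast
      define n where "n = length u"
      have un: "u = W n" using Wlen n_def by simp
      show "y \<in> \<Union>(insert F0 (S ` {..<p}))"
      proof (cases "n < T")
        case True
        then have "y \<in> F0" using u un by (auto simp: F0_def)
        then show ?thesis by simp
      next
        case False
        define c where "c = (n - T) mod p"
        define k where "k = (n - T) div p"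
        have "T + c + k * p = n" unfolding c_def k_def
          using div_mult_mod_eq[of "n - T" p] False by linarith
        then have "y \<in> S c" using u un by (auto simp: S_def)
        moreover have "c < p" using ppos by (simp add: c_def)
        ultimately show ?thesis by auto
      qed
    qed
  qed
  have "\<forall>S'\<in>insert F0 (S ` {..<p}). good r S'" using goodS good_finite[OF fF0] by auto
  moreover have "finite (insert F0 (S ` {..<p}))" using fF0 by simp
  ultimately have "\<exists>P. okpart r (\<Union>(insert F0 (S ` {..<p}))) P" using partition_good by blast
  then have "\<exists>P. okpart r X P" unfolding cover[symmetric] .
  then show ?thesis unfolding okpart_def .
qed

end
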